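(* Let $m,n\ge1$, let $U\subseteq\mathbb{R}^{m\times n}$ be a non-empty open connected set and $\varphi:U\to U$ an injective continuous map. Then there is a dense $G_\delta$ subset $\Omega$ of $U$ with $\Omega\subseteq\mathscr{L}_{m,n}$ such that for every $A\in\Omega$ and every $k\ge1$, the iterate $\varphi^k(A)=\varphi\circ\cdots\circ\varphi(A)$ ($k$ times) lies in $\mathscr{L}_{m,n}\cap U$.
   Context: $\Vert\cdot\Vert$ is the supremum norm; a real $m\times n$ matrix $A$ is a Liouville matrix if $A\mathbf{q}-\mathbf{p}\neq\mathbf{0}$ for all nonzero $(\mathbf{q},\mathbf{p})\in\mathbb{Z}^n\times\mathbb{Z}^m$ and for every $N$ there exist $\mathbf{p}\in\mathbb{Z}^m$, $\mathbf{q}\in\mathbb{Z}^n\setminus\{\mathbf{0}\}$ with $\Vert A\mathbf{q}-\mathbf{p}\Vert<\Vert\mathbf{q}\Vert^{-N}$; $\mathscr{L}_{m,n}$ is the set of these. $\mathbb{R}^{m\times n}$ carries the topology of $\mathbb{R}^{mn}$. *)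

theory Defs
  imports "HOL-Analysis.Analysis"
begin

text \<open>Real m x n matrices are represented as real^'n^'m (rows indexed by 'm,
columns by 'n). Integer vectors are real vectors with integer entries.
The supremum norm is infnorm.\<close>

definition int_vec :: "real^'k \<Rightarrow> bool" where
  "int_vec v \<longleftrightarrow> (\<forall>i. v $ i \<in> \<int>)"

definition liouville_matrix :: "real^'n^'m \<Rightarrow> bool" where
  "liouville_matrix A \<longleftrightarrow>
     (\<forall>q p. int_vec q \<longrightarrow> int_vec p \<longrightarrow> (q, p) \<noteq> (0, 0) \<longrightarrow> A *v q - p \<noteq> 0) \<and>
     (\<forall>N::nat. \<exists>q p. int_vec q \<and> int_vec p \<and> q \<noteq> 0 \<and>
        infnorm (A *v q - p) < infnorm q powr (- real N))"

definition liouville_set :: "(real^'n^'m) set" where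
  "liouville_set = {A. liouville_matrix A}"

end

theory Submission
  imports Defs "HOL-Homology.Invariance_of_Domain"
begin


lemma cont_mv: "continuous_on S (\<lambda>A::real^'n^'m. A *v q)"
  unfolding matrix_vector_mult_def by (intro continuous_intros)

lemma countable_intvec: "countable {q::real^'k. int_vec q}"
proof -
  have "{q::real^'k. int_vec q} \<subseteq> range (\<lambda>z::'k\<Rightarrow>int. \<chi> i. of_int (z i))"
  proof
    fix q :: "real^'k" assume "q \<in> {q. int_vec q}"
    then have "\<forall>i. \<exists>z. q$i = of_int z" by (auto simp: int_vec_def Ints_def)
    then obtain z where "\<forall>i. q$i = of_int (z i)" by metis
    then have "q = (\<chi> i. of_int (z i))" by (simp add: vec_eq_iff)
    then show "q \<in> range (\<lambda>z::'k\<Rightarrow>int. \<chi> i. of_int (z i))" by blast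
  qed
  moreover have "countable (range (\<lambda>z::'k\<Rightarrow>int. (\<chi> i. of_int (z i)) :: real^'k))" by simp
  ultimately show ?thesis using countable_subset by blast
qed


lemma dense_H:
  fixes q :: "real^'n" and p :: "real^'m"
  assumes "q \<noteq> 0"
  shows "closure {A::real^'n^'m. A *v q - p \<noteq> 0} = UNIV"
proof -
  { fix A :: "real^'n^'m"
    obtain j where j: "q$j \<noteq> 0" using assms by (metis vec_eq_iff zero_index)
    define E :: "real^'n^'m" where "E = (\<chi> i k. if k = j then 1 else 0)"
    have "(\<Sum>k\<in>UNIV. (if k = j then 1 else 0) * q$k) = (\<Sum>k\<in>UNIV. if k = j then q$k else 0)"
      by (rule sum.cong) auto
    then have Eq: "E *v q = (\<chi> i. q$j)"
      by (simp add: E_def matrix_vector_mult_def vec_eq_iff)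
    have Eq0: "E *v q \<noteq> 0" using j by (simp add: Eq vec_eq_iff)
    have "A \<in> closure {A::real^'n^'m. A *v q - p \<noteq> 0}"
    proof (cases "A *v q - p \<noteq> 0")
      case True then show ?thesis by (simp add: closure_subset[THEN subsetD])
    next
      case False
      define B where "B n = A + inverse (real (Suc n)) *\<^sub>R E" for n
      have "B n *v q - p \<noteq> 0" for n
        using False Eq0 by (simp add: B_def matrix_vector_mult_add_rdistrib scaleR_matrix_vector_assoc[symmetric])
      moreover have "B \<longlonglongrightarrow> A"
      proof -
        have "(\<lambda>n. A + inverse (real (Suc n)) *\<^sub>R E) \<longlonglongrightarrow> A + 0 *\<^sub>R E"
          by (intro tendsto_intros LIMSEQ_inverse_real_of_nat)
        then show ?thesis unfolding B_def by simp
      qed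
      ultimately show ?thesis unfolding closure_sequential by blast
    qed }
  then show ?thesis by auto
qed

lemma round_lim: "(\<lambda>M. of_int (round (real (Suc M) * c)) / real (Suc M)) \<longlonglongrightarrow> (c::real)"
proof -
  have "(\<lambda>M. of_int (round (real (Suc M) * c)) / real (Suc M) - c) \<longlonglongrightarrow> 0"
  proof (rule Lim_null_comparison)
    show "\<forall>\<^sub>F M in sequentially. norm (of_int (round (real (Suc M) * c)) / real (Suc M) - c) \<le> inverse (real (Suc M))"
    proof (intro always_eventually allI)
      fix M
      have "\<bar>of_int (round (real (Suc M) * c)) - real (Suc M) * c\<bar> \<le> 1"
        using of_int_round_abs_le[of "real (Suc M) * c"] by linarith
      then have "\<bar>of_int (round (real (Suc M) * c)) - real (Suc M) * c\<bar> / real (Suc M) \<le> 1 / real (Suc M)"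
        by (intro divide_right_mono) simp_all
      then have "\<bar>(of_int (round (real (Suc M) * c)) - real (Suc M) * c) / real (Suc M)\<bar> \<le> inverse (real (Suc M))"
      proof -
        have e1: "\<bar>(of_int (round (real (Suc M) * c)) - real (Suc M) * c) / real (Suc M)\<bar> = \<bar>of_int (round (real (Suc M) * c)) - real (Suc M) * c\<bar> / real (Suc M)"
          by (simp add: abs_div)
        have e2: "1 / real (Suc M) = inverse (real (Suc M))" by (simp only: inverse_eq_divide)
        show ?thesis using e1 e2 \<open>\<bar>of_int (round (real (Suc M) * c)) - real (Suc M) * c\<bar> / real (Suc M) \<le> 1 / real (Suc M)\<close> by (simp only: e1 e2[symmetric])
      qed
      moreover have "(of_int (round (real (Suc M) * c)) - real (Suc M) * c) / real (Suc M) = of_int (round (real (Suc M) * c)) / real (Suc M) - c"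
        by (simp add: field_simps)
      ultimately have "\<bar>of_int (round (real (Suc M) * c)) / real (Suc M) - c\<bar> \<le> inverse (real (Suc M))" by (simp only:)
      then show "norm (of_int (round (real (Suc M) * c)) / real (Suc M) - c) \<le> inverse (real (Suc M))" by (simp only: real_norm_def)
    qed
    show "(\<lambda>M. inverse (real (Suc M))) \<longlonglongrightarrow> 0" by (rule LIMSEQ_inverse_real_of_nat)
  qed
  then show ?thesis by (simp add: LIM_zero_cancel)
qed

lemma dense_O:
  "closure {A::real^'n^'m. \<exists>q p. int_vec q \<and> int_vec p \<and> q \<noteq> 0 \<and>
        infnorm (A *v q - p) < infnorm q powr (- real N)} = UNIV"
proof -
  { fix A :: "real^'n^'m"
    obtain j0 :: 'n where True by simp
    define B :: "nat \<Rightarrow> real^'n^'m" where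
      "B M = (\<chi> i k. if k = j0 then of_int (round (real (Suc M) * A$i$k)) / real (Suc M) else A$i$k)" for M
    have "B M \<in> {A::real^'n^'m. \<exists>q p. int_vec q \<and> int_vec p \<and> q \<noteq> 0 \<and>
        infnorm (A *v q - p) < infnorm q powr (- real N)}" for M
    proof -
      define q :: "real^'n" where "q = (\<chi> k. if k = j0 then real (Suc M) else 0)"
      define p :: "real^'m" where "p = (\<chi> i. of_int (round (real (Suc M) * A$i$j0)))"
      have iq: "int_vec q" by (simp add: int_vec_def q_def)
      have ip: "int_vec p" by (simp add: int_vec_def p_def)
      have q0: "q \<noteq> 0" by (simp add: q_def vec_eq_iff) 
      have "B M *v q = p"
        by (simp add: B_def q_def p_def matrix_vector_mult_def vec_eq_iff if_distrib cong: if_cong)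
      moreover have "infnorm q > 0" using q0 by (simp add: infnorm_pos_lt)
      ultimately show ?thesis using iq ip q0 by (intro CollectI exI[of _ q] exI[of _ p]) (simp add: infnorm_0)
    qed
    moreover have "B \<longlonglongrightarrow> A"
      unfolding B_def
    proof (rule vec_tendstoI, rule vec_tendstoI)
      fix i k
      show "(\<lambda>M. (\<chi> i k. if k = j0 then of_int (round (real (Suc M) * A$i$k)) / real (Suc M) else A$i$k) $ i $ k) \<longlonglongrightarrow> A $ i $ k"
        using round_lim[of "A$i$k"] by (cases "k = j0") simp_all
    qed
    ultimately have "A \<in> closure {A::real^'n^'m. \<exists>q p. int_vec q \<and> int_vec p \<and> q \<noteq> 0 \<and>
        infnorm (A *v q - p) < infnorm q powr (- real N)}" unfolding closure_sequential by blast }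
  then show ?thesis by auto
qed

lemma open_O:
  "open {A::real^'n^'m. \<exists>q p. int_vec q \<and> int_vec p \<and> q \<noteq> 0 \<and>
        infnorm (A *v q - p) < infnorm q powr (- real N)}"
proof -
  have "{A::real^'n^'m. \<exists>q p. int_vec q \<and> int_vec p \<and> q \<noteq> 0 \<and>
        infnorm (A *v q - p) < infnorm q powr (- real N)} =
     (\<Union>q\<in>{q. int_vec q \<and> q \<noteq> 0}. \<Union>p\<in>{p. int_vec p}. {A. infnorm (A *v q - p) < infnorm q powr (- real N)})"
    by auto
  moreover have "open {A::real^'n^'m. infnorm (A *v q - p) < c}" for q p c
    by (intro open_Collect_less continuous_intros cont_mv)
  ultimately show ?thesis by (simp add: open_UN)
qed

lemma open_H: "open {A::real^'n^'m. A *v q - p \<noteq> 0}"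
  by (intro open_Collect_neq continuous_intros cont_mv)


lemma iter_props:
  assumes "\<phi> ` U \<subseteq> U" and "inj_on \<phi> U" and "continuous_on U \<phi>"
  shows "(\<phi> ^^ k) ` U \<subseteq> U \<and> inj_on (\<phi> ^^ k) U \<and> continuous_on U (\<phi> ^^ k)"
proof (induction k)
  case 0 then show ?case by (simp add: continuous_on_id)
next
  case (Suc k)
  then have a: "(\<phi> ^^ k) ` U \<subseteq> U" "inj_on (\<phi> ^^ k) U" "continuous_on U (\<phi> ^^ k)" by auto
  have "(\<phi> ^^ Suc k) = \<phi> \<circ> (\<phi> ^^ k)" by simp
  moreover have "(\<phi> \<circ> (\<phi> ^^ k)) ` U \<subseteq> U" using a assms by (auto simp: image_subset_iff)
  moreover have "inj_on (\<phi> \<circ> (\<phi> ^^ k)) U"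
    using a assms by (intro comp_inj_on) (auto intro: inj_on_subset)
  moreover have "continuous_on U (\<phi> \<circ> (\<phi> ^^ k))"
    using a assms by (intro continuous_on_compose) (auto intro: continuous_on_subset)
  ultimately show ?case by (simp only:)
qed

lemma liouville_Inter:
  "liouville_set = \<Inter>(range (\<lambda>N. {A::real^'n^'m. \<exists>q p. int_vec q \<and> int_vec p \<and> q \<noteq> 0 \<and>
        infnorm (A *v q - p) < infnorm q powr (- real N)}) \<union>
     (\<lambda>(q,p). {A::real^'n^'m. A *v q - p \<noteq> 0}) ` ({q. int_vec q \<and> q \<noteq> 0} \<times> {p. int_vec p}))"
proof -
  have eq: "liouville_matrix A \<longleftrightarrow> A \<in> \<Inter>(range (\<lambda>N. {A::real^'n^'m. \<exists>q p. int_vec q \<and> int_vec p \<and> q \<noteq> 0 \<and>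
        infnorm (A *v q - p) < infnorm q powr (- real N)}) \<union>
     (\<lambda>(q,p). {A::real^'n^'m. A *v q - p \<noteq> 0}) ` ({q. int_vec q \<and> q \<noteq> 0} \<times> {p. int_vec p}))" for A :: "real^'n^'m"
  proof
    assume "liouville_matrix A" then show "A \<in> \<Inter>(range (\<lambda>N. {A::real^'n^'m. \<exists>q p. int_vec q \<and> int_vec p \<and> q \<noteq> 0 \<and>
        infnorm (A *v q - p) < infnorm q powr (- real N)}) \<union>
     (\<lambda>(q,p). {A::real^'n^'m. A *v q - p \<noteq> 0}) ` ({q. int_vec q \<and> q \<noteq> 0} \<times> {p. int_vec p}))"
      unfolding liouville_matrix_def by auto
  next
    assume h: "A \<in> \<Inter>(range (\<lambda>N. {A::real^'n^'m. \<exists>q p. int_vec q \<and> int_vec p \<and> q \<noteq> 0 \<and>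
        infnorm (A *v q - p) < infnorm q powr (- real N)}) \<union>
     (\<lambda>(q,p). {A::real^'n^'m. A *v q - p \<noteq> 0}) ` ({q. int_vec q \<and> q \<noteq> 0} \<times> {p. int_vec p}))"
    have 1: "A *v q - p \<noteq> 0" if "int_vec q" "int_vec p" "(q, p) \<noteq> (0, 0)" for q p
    proof (cases "q = 0")
      case True then show ?thesis using that by simp
    next
      case False then show ?thesis using that h by auto
    qed
    show "liouville_matrix A" unfolding liouville_matrix_def using 1 h by auto
  qed
  show ?thesis unfolding liouville_set_def using eq by blast
qed



theorem mainTheorem9:
  fixes U :: "(real^'n^'m) set" and \<phi> :: "real^'n^'m \<Rightarrow> real^'n^'m"
  assumes "U \<noteq> {}" and "open U" and "connected U"
    and "\<phi> ` U \<subseteq> U" and "inj_on \<phi> U" and "continuous_on U \<phi>"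
  shows "\<exists>\<Omega>. gdelta_in (top_of_set U) \<Omega> \<and> U \<subseteq> closure \<Omega> \<and>
           \<Omega> \<subseteq> liouville_set \<and>
           (\<forall>A\<in>\<Omega>. \<forall>k::nat. k \<ge> 1 \<longrightarrow> (\<phi> ^^ k) A \<in> liouville_set \<inter> U)"
proof -
  define F where "F = range (\<lambda>N. {A::real^'n^'m. \<exists>q p. int_vec q \<and> int_vec p \<and> q \<noteq> 0 \<and>
        infnorm (A *v q - p) < infnorm q powr (- real N)}) \<union>
     (\<lambda>(q,p). {A::real^'n^'m. A *v q - p \<noteq> 0}) ` ({q. int_vec q \<and> q \<noteq> 0} \<times> {p. int_vec p})"
  have LF: "liouville_set = \<Inter>F" unfolding F_def by (rule liouville_Inter)
  have cQ: "countable {q::real^'n. int_vec q \<and> q \<noteq> 0}" by (rule countable_subset[OF _ countable_intvec]) auto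
  have cF: "countable F" unfolding F_def
    using countable_intvec cQ by (intro countable_Un countable_image countable_SIGMA) auto
  have Fne: "F \<noteq> {}" unfolding F_def by simp
  have oFdF: "open f \<and> closure f = UNIV" if "f \<in> F" for f
  proof -
    from that[unfolded F_def] show ?thesis
    proof (rule UnE)
      assume "f \<in> range (\<lambda>N. {A::real^'n^'m. \<exists>q p. int_vec q \<and> int_vec p \<and> q \<noteq> 0 \<and>
        infnorm (A *v q - p) < infnorm q powr (- real N)})"
      then obtain N where "f = {A::real^'n^'m. \<exists>q p. int_vec q \<and> int_vec p \<and> q \<noteq> 0 \<and>
        infnorm (A *v q - p) < infnorm q powr (- real N)}" by (rule rangeE)
      then show ?thesis by (simp only: open_O dense_O simp_thms)
    next
      assume "f \<in> (\<lambda>(q,p). {A::real^'n^'m. A *v q - p \<noteq> 0}) ` ({q. int_vec q \<and> q \<noteq> 0} \<times> {p. int_vec p})"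
      then obtain x where x: "x \<in> {q. int_vec q \<and> q \<noteq> 0} \<times> {p. int_vec p}"
        and fx: "f = (\<lambda>(q,p). {A::real^'n^'m. A *v q - p \<noteq> 0}) x" by (rule imageE)
      obtain q p where qp: "x = (q, p)" by (cases x)
      have q0: "q \<noteq> 0" using x qp by simp
      have "f = {A::real^'n^'m. A *v q - p \<noteq> 0}" using fx qp by (simp only: prod.case)
      then show ?thesis using dense_H[OF q0] by (simp only: open_H simp_thms)
    qed
  qed
  have oF: "open f" and dF: "closure f = UNIV" if "f \<in> F" for f
    using oFdF[OF that] by auto
  have it: "(\<phi> ^^ k) ` U \<subseteq> U" "inj_on (\<phi> ^^ k) U" "continuous_on U (\<phi> ^^ k)" for k
    using iter_props[OF assms(4-6)] by blast+
  define W where "W k f = U \<inter> (\<phi> ^^ k) -` f" for k f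
  define G where "G = (\<lambda>(k,f). W k f) ` (UNIV \<times> F)"
  have cG: "countable G" unfolding G_def using cF by (intro countable_image countable_SIGMA) auto
  have Gne: "G \<noteq> {}" unfolding G_def using Fne by auto
  have oW: "openin (top_of_set U) (W k f)" if "f \<in> F" for k f
    unfolding W_def using it(3) oF[OF that] by (intro continuous_openin_preimage[where T=UNIV]) auto
  have gd: "gdelta_in (top_of_set U) (\<Inter>G)"
    using cG Gne oW by (intro gdelta_in_Inter open_imp_gdelta_in) (auto simp: G_def)
  have dW: "U \<subseteq> closure (W k f)" if "f \<in> F" for k f
  proof
    fix x assume x: "x \<in> U"
    show "x \<in> closure (W k f)"
    proof (rule ccontr)
      assume "x \<notin> closure (W k f)"
      then have "x \<in> - closure (W k f)" by simp
      then obtain e where e0: "e > 0" "ball x e \<subseteq> - closure (W k f)"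
        using open_contains_ball_eq[of "- closure (W k f)"] by blast
      then have e: "e > 0" "ball x e \<inter> W k f = {}" using closure_subset[of "W k f"] by blast+
      define V where "V = ball x e \<inter> U"
      have oV: "open V" using assms(2) by (simp add: V_def open_Int)
      have "x \<in> V" using x e by (simp add: V_def)
      have "open ((\<phi> ^^ k) ` V)"
      proof (rule invariance_of_domain)
        show "continuous_on V (\<phi> ^^ k)" using it(3) by (rule continuous_on_subset) (simp add: V_def)
        show "inj_on (\<phi> ^^ k) V" using it(2) by (rule inj_on_subset) (simp add: V_def)
      qed (rule oV)
      moreover have "(\<phi> ^^ k) ` V \<noteq> {}" using \<open>x \<in> V\<close> by auto
      ultimately have "(\<phi> ^^ k) ` V \<inter> f \<noteq> {}"
        using open_Int_closure_eq_empty[of "(\<phi> ^^ k) ` V" f] dF[OF that] by auto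
      then obtain z where "z \<in> V" "(\<phi> ^^ k) z \<in> f" by auto
      then have "z \<in> ball x e \<inter> W k f" by (simp add: V_def W_def)
      then show False using e by auto
    qed
  qed
  have dense: "U \<subseteq> closure (\<Inter>G)"
  proof -
    define G' where "G' = (\<lambda>w. w \<union> - closure U) ` G"
    have "UNIV \<subseteq> closure (\<Inter>G')"
    proof (rule Baire)
      show "countable G'" unfolding G'_def using cG by simp
      fix T assume "T \<in> G'"
      then obtain k f where f: "f \<in> F" and T: "T = W k f \<union> - closure U"
        unfolding G'_def G_def by auto
      have "open (W k f)" using oW[OF f] assms(2) openin_open_trans by blast
      then have "open T" unfolding T by (intro open_Un open_Compl closed_closure)
      moreover have "closure U \<subseteq> closure T"
      proof -
        have "closure (W k f) \<subseteq> closure T" by (rule closure_mono) (simp add: T)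
        then have "U \<subseteq> closure T" using dW[OF f] by blast
        then show ?thesis by (rule closure_minimal) simp
      qed
      moreover have "- closure U \<subseteq> closure T" unfolding T using closure_subset[of "W k f \<union> - closure U"] by blast
      ultimately have "openin (top_of_set UNIV) T" "UNIV \<subseteq> closure T" by auto
      then show "openin (top_of_set UNIV) T \<and> UNIV \<subseteq> closure T" by (rule conjI)
    qed simp
    then have "U \<subseteq> U \<inter> closure (\<Inter>G')" by auto
    also have "\<dots> \<subseteq> closure (U \<inter> \<Inter>G')" by (rule open_Int_closure_subset[OF assms(2)])
    also have "U \<inter> \<Inter>G' \<subseteq> \<Inter>G"
    proof
      fix y assume y: "y \<in> U \<inter> \<Inter>G'"
      show "y \<in> \<Inter>G"
      proof
        fix w assume "w \<in> G"
        then have "w \<union> - closure U \<in> G'" unfolding G'_def by (rule imageI)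
        then have "y \<in> w \<union> - closure U" using y by blast
        moreover have "y \<in> closure U" using y closure_subset[of U] by blast
        ultimately show "y \<in> w" by blast
      qed
    qed
    then have "closure (U \<inter> \<Inter>G') \<subseteq> closure (\<Inter>G)" by (rule closure_mono)
    finally show ?thesis .
  qed
  have WG: "W k f \<in> G" if "f \<in> F" for k f
    unfolding G_def using that by (intro image_eqI[of _ _ "(k,f)"]) auto
  have mem: "A \<in> U \<and> (\<forall>f\<in>F. (\<phi> ^^ k) A \<in> f)" if "A \<in> \<Inter>G" for A k
  proof -
    obtain f0 where "f0 \<in> F" using Fne by blast
    have "\<forall>f\<in>F. A \<in> W k f" using that WG by blast
    then show ?thesis using \<open>f0 \<in> F\<close> unfolding W_def by blast
  qed
  show ?thesis
  proof (intro exI[of _ "\<Inter>G"] conjI gd dense ballI allI impI)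
    show "\<Inter>G \<subseteq> liouville_set"
      using mem[where k=0] LF by auto
    fix A k assume "A \<in> \<Inter>G" "(1::nat) \<le> k"
    then show "(\<phi> ^^ k) A \<in> liouville_set \<inter> U"
      using mem[of A k] LF it(1) by blast
  qed
qed


end
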